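(* For every $x\in\Pi[N]$ and every $k\in\mathbb Z$, $$x[k]=\frac12\sum_{\mu=0}^{1}\sum_{l=0}^{N/2-1}\Big(y^{\mu}[l]\,\psi_{[1],\mu}[k-2l]+c^{\mu}[l]\,\varphi_{[1],\mu}[k-2l]\Big),$$ where $y^{\mu}[l]=\langle x,\psi_{[1],\mu}[\cdot-2l]\rangle$ and $c^{\mu}[l]=\langle x,\varphi_{[1],\mu}[\cdot-2l]\rangle$. Consequently the system $\{\psi_{[1],\mu}[\cdot-2l]\}\cup\{\varphi_{[1],\mu}[\cdot-2l]\}$ ($\mu\in\{0,1\}$, $0\le l<N/2$) is a tight frame of $\Pi[N]$ with frame bound $2$.
   Context: Let $N=2^{J}$ with $J\ge 1$ an integer and $\omega=e^{2\pi i/N}$. $\Pi[N]$ denotes the real vector space of real-valued $N$-periodic sequences $x=\{x[k]\}_{k\in\mathbb Z}$, with inner product $\langle x,y\rangle=\sum_{k=0}^{N-1}x[k]y[k]$. The DFT of an $N$-periodic sequence is $\hat x[n]=\sum_{k=0}^{N-1}x[k]\omega^{-kn}$, with inverse $x[k]=\frac1N\sum_{n=0}^{N-1}\hat x[n]\omega^{kn}$. Fix an integer $r\ge1$; let $U[n]=\tfrac12\big(\cos^{4r}\tfrac{\pi n}{N}+\sin^{4r}\tfrac{\pi n}{N}\big)$, $\beta[n]=\cos^{2r}\tfrac{\pi n}{N}/\sqrt{U[n]}$, $\alpha[n]=\omega^{n}\sin^{2r}\tfrac{\pi n}{N}/\sqrt{U[n]}$. The first-level wavelet packets $\psi_{[1],0},\psi_{[1],1}\in\Pi[N]$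 have DFTs $\hat\psi_{[1],0}=\beta$, $\hat\psi_{[1],1}=\alpha$. Known fact (may be assumed): $\{\psi_{[1],\mu}[\cdot-2l]:\mu\in\{0,1\},\,0\le l<N/2\}$ is an orthonormal basis of $\Pi[N]$. The complementary wavelet packets $\varphi_{[1],\mu}\in\Pi[N]$ have DFT $\hat\varphi_{[1],\mu}[n]=-i\hat\psi_{[1],\mu}[n]$ for $0<n<N/2$, $=i\hat\psi_{[1],\mu}[n]$ for $N/2<n<N$, and $=\hat\psi_{[1],\mu}[n]$ for $n\in\{0,N/2\}$ (indices mod $N$). *)

theory Defs
  imports "HOL-Analysis.Analysis"
begin

definition PiN :: "nat \<Rightarrow> (int \<Rightarrow> real) set" where
  "PiN N = {x. \<forall>k. x (k + int N) = x k}"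

definition ip :: "nat \<Rightarrow> (int \<Rightarrow> real) \<Rightarrow> (int \<Rightarrow> real) \<Rightarrow> real" where
  "ip N x y = (\<Sum>k\<in>{0..<int N}. x k * y k)"

definition omega :: "nat \<Rightarrow> complex" where
  "omega N = cis (2 * pi / real N)"

definition idft :: "nat \<Rightarrow> (int \<Rightarrow> complex) \<Rightarrow> int \<Rightarrow> complex" where
  "idft N X k = (1 / of_nat N) * (\<Sum>n\<in>{0..<int N}. X n * omega N powi (k * n))"

definition Ufun :: "nat \<Rightarrow> nat \<Rightarrow> int \<Rightarrow> real" where
  "Ufun r N n = (1/2) * (cos (pi * real_of_int n / real N) ^ (4*r)
                       + sin (pi * real_of_int n / real N) ^ (4*r))"

definition betaf :: "nat \<Rightarrow> nat \<Rightarrow> int \<Rightarrow> complex" where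
  "betaf r N n = complex_of_real (cos (pi * real_of_int n / real N) ^ (2*r) / sqrt (Ufun r N n))"

definition alphaf :: "nat \<Rightarrow> nat \<Rightarrow> int \<Rightarrow> complex" where
  "alphaf r N n = omega N powi n *
     complex_of_real (sin (pi * real_of_int n / real N) ^ (2*r) / sqrt (Ufun r N n))"

definition psi_hat :: "nat \<Rightarrow> nat \<Rightarrow> nat \<Rightarrow> int \<Rightarrow> complex" where
  "psi_hat r N \<mu> = (if \<mu> = 0 then betaf r N else alphaf r N)"

definition phi_hat :: "nat \<Rightarrow> nat \<Rightarrow> nat \<Rightarrow> int \<Rightarrow> complex" where
  "phi_hat r N \<mu> n =
     (let m = n mod int N in
      if 0 < m \<and> 2 * m < int N then - \<i> * psi_hat r N \<mu> n
      else if int N < 2 * m then \<i> * psi_hat r N \<mu> n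
      else psi_hat r N \<mu> n)"

text \<open>The packets are real-valued sequences; we take the real part of the inverse DFT
  (the inverse DFT is real by the conjugate symmetry of the DFTs).\<close>
definition psi1 :: "nat \<Rightarrow> nat \<Rightarrow> nat \<Rightarrow> int \<Rightarrow> real" where
  "psi1 r N \<mu> k = Re (idft N (psi_hat r N \<mu>) k)"

definition phi1 :: "nat \<Rightarrow> nat \<Rightarrow> nat \<Rightarrow> int \<Rightarrow> real" where
  "phi1 r N \<mu> k = Re (idft N (phi_hat r N \<mu>) k)"

definition shift2 :: "(int \<Rightarrow> real) \<Rightarrow> int \<Rightarrow> int \<Rightarrow> real" where
  "shift2 f l = (\<lambda>k. f (k - 2 * l))"

end

theory Submission imports Defs "HOL-Library.Real_Mod" begin

definition ee :: "nat \<Rightarrow> int \<Rightarrow> complex" where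
  "ee N a = cis (2 * pi * of_int a / real N)"

lemma omega_powi: "omega N powi a = ee N a"
  unfolding omega_def ee_def cis_power_int by (simp add: field_simps)

lemma ee_add: "ee N (a + b) = ee N a * ee N b"
  unfolding ee_def cis_mult by (simp add: add_divide_distrib distrib_left)

lemma ee_neg: "cnj (ee N a) = ee N (- a)"
  unfolding ee_def cis_cnj by simp

lemma ee_zero[simp]: "ee N 0 = 1"
  unfolding ee_def by simp

lemma ee_multN: assumes "N > 0" shows "ee N (b * int N) = 1"
proof -
  have "2 * pi * of_int (b * int N) / real N = 2 * pi * of_int b" using assms by simp
  thus ?thesis unfolding ee_def by simp
qed

lemma ee_per: assumes "N > 0" shows "ee N (a + b * int N) = ee N a"
  using ee_add[of N a "b * int N"] ee_multN[OF assms] by simp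

lemma ee_mod: assumes "N > 0" shows "ee N (a mod int N) = ee N a"
proof -
  have "a mod int N + a div int N * int N = a" by simp
  thus ?thesis using ee_per[OF assms, of "a mod int N" "a div int N"] by simp
qed

lemma ee_norm[simp]: "cnj (ee N a) * ee N a = 1"
  unfolding ee_def cis_cnj cis_mult by simp

lemma geom:
  assumes K: "K > 0"
  shows "(\<Sum>l\<in>{0..<int K}. cis (2 * pi * of_int (l * d) / real K)) = (if int K dvd d then of_nat K else 0)"
proof -
  have set: "{0..<int K} = int ` {..<K}" using image_int_atLeastLessThan[of 0 K] by (simp add: atLeast0LessThan)
  define w where "w = cis (2 * pi * of_int d / real K)"
  have "(\<Sum>l\<in>{0..<int K}. cis (2 * pi * of_int (l * d) / real K)) = (\<Sum>i<K. cis (2 * pi * of_int (int i * d) / real K))"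
    unfolding set by (subst sum.reindex) (auto simp: inj_on_def)
  also have "\<dots> = (\<Sum>i<K. w ^ i)"
    unfolding w_def by (intro sum.cong) (auto simp: Complex.DeMoivre field_simps)
  finally have S: "(\<Sum>l\<in>{0..<int K}. cis (2 * pi * of_int (l * d) / real K)) = (\<Sum>i<K. w ^ i)" .
  show ?thesis
  proof (cases "int K dvd d")
    case True
    then obtain q where q: "d = int K * q" by blast
    have "2 * pi * of_int d / real K = 2 * pi * of_int q" using K unfolding q by simp
    hence "w = 1" unfolding w_def by simp
    then show ?thesis using S True by simp
  next
    case False
    have "w \<noteq> 1"
    proof
      assume "w = 1"
      then obtain n where n: "2 * pi * of_int d / real K = of_int n * (2 * pi)" unfolding w_def cis_eq_1_iff by blast
      hence "real_of_int d = of_int n * real K" using K by (simp add: field_simps)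
      hence "d = n * int K" by (metis of_int_eq_iff of_int_mult of_int_of_nat_eq)
      thus False using False by simp
    qed
    moreover have "real K * (2 * pi * of_int d / real K) = 2 * pi * of_int d" using K by simp
    hence "w ^ K = 1" unfolding w_def Complex.DeMoivre by simp
    ultimately show ?thesis using S False geometric_sum[of w K] by simp
  qed
qed

definition per :: "nat \<Rightarrow> (int \<Rightarrow> 'a) \<Rightarrow> bool" where
  "per N F \<longleftrightarrow> (\<forall>x. F (x + int N) = F x)"

lemma per_mult: assumes "per N F" shows "F (x + b * int N) = F x"
proof (induct b rule: int_induct[where k=0])
  case base then show ?case by simp
next
  case (step1 i)
  have "F (x + (i + 1) * int N) = F ((x + i * int N) + int N)" by (simp add: algebra_simps)
  also have "\<dots> = F x" using assms step1 unfolding per_def by simp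
  finally show ?case .
next
  case (step2 i)
  have "F (x + (i - 1) * int N) = F ((x + (i - 1) * int N) + int N)" using assms unfolding per_def by simp
  also have "\<dots> = F (x + i * int N)" by (simp add: algebra_simps)
  finally show ?case using step2 by simp
qed

lemma per_mod: assumes "per N F" shows "F (x mod int N) = F x"
proof -
  show ?thesis using per_mult[OF assms, of "x mod int N" "x div int N"] by (simp only: mod_div_mult_eq)
qed

lemma sum_shift:
  assumes "per N F" "N > 0"
  shows "(\<Sum>m\<in>{0..<int N}. F m) = (\<Sum>t\<in>{0..<int N}. F (t + a))"
proof (rule sym, rule sum.reindex_bij_witness[where j="\<lambda>t. (t + a) mod int N" and i="\<lambda>m. (m - a) mod int N"])
  fix t assume "t \<in> {0..<int N}"
  have "((t + a) mod int N - a) mod int N = (t + a - a) mod int N" by (rule mod_diff_left_eq)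
  then show "((t + a) mod int N - a) mod int N = t" using \<open>t \<in> {0..<int N}\<close> by simp
next
  fix t assume "t \<in> {0..<int N}"
  then show "(t + a) mod int N \<in> {0..<int N}" using assms by simp
next
  fix m assume "m \<in> {0..<int N}"
  then show "((m - a) mod int N + a) mod int N = m" by (simp add: mod_add_left_eq)
next
  fix m assume "m \<in> {0..<int N}"
  then show "(m - a) mod int N \<in> {0..<int N}" using assms by simp
next
  fix t assume "t \<in> {0..<int N}"
  then show "F ((t + a) mod int N) = F (t + a)" using per_mod[OF assms(1)] by simp
qed

lemma alias_sum:
  fixes F :: "int \<Rightarrow> complex"
  assumes M: "M > 0" and N: "N = 2 * M" and P: "per N F"
  shows "(\<Sum>m\<in>{0..<int N}. F m * (if int M dvd (m - n) then of_nat M else 0)) = of_nat M * (F n + F (n + int M))"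
proof -
  define Q where "Q m = F m * (if int M dvd (m - n) then of_nat M else 0)" for m
  have PQ: "per N Q" unfolding per_def Q_def
  proof
    fix x
    have "int M dvd (x + int N - n) \<longleftrightarrow> int M dvd (x - n)"
    proof -
      have "x + int N - n = (x - n) + int M * 2" using N by simp
      thus ?thesis by (metis dvd_add_left_iff dvd_triv_left)
    qed
    then show "F (x + int N) * (if int M dvd (x + int N - n) then of_nat M else 0) = F x * (if int M dvd (x - n) then of_nat M else 0)"
      using P unfolding per_def by simp
  qed
  have "(\<Sum>m\<in>{0..<int N}. Q m) = (\<Sum>t\<in>{0..<int N}. Q (t + n))"
    by (rule sum_shift[OF PQ]) (use M N in simp)
  also have "\<dots> = (\<Sum>t\<in>{0, int M}. Q (t + n))"
  proof (rule sum.mono_neutral_right)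
    show "finite {0..<int N}" by simp
    show "{0, int M} \<subseteq> {0..<int N}" using M N by auto
    show "\<forall>i\<in>{0..<int N} - {0, int M}. Q (i + n) = 0"
    proof
      fix i assume i: "i \<in> {0..<int N} - {0, int M}"
      show "Q (i + n) = 0"
      proof (cases "int M dvd i")
        case True
        then obtain q where q: "i = int M * q" by blast
        have "0 \<le> int M * q" "int M * q < int M * 2" using i q N by auto
        hence "0 \<le> q" "q < 2" using M by (auto simp: zero_le_mult_iff)
        hence "q = 0 \<or> q = 1" by auto
        then show ?thesis using i q by auto
      next
        case False then show ?thesis unfolding Q_def by simp
      qed
    qed
  qed
  also have "\<dots> = of_nat M * (F n + F (n + int M))"
    using M unfolding Q_def by (simp add: algebra_simps)
  finally show ?thesis unfolding Q_def .
qed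

lemma swap3:
  fixes f :: "'a \<Rightarrow> 'b \<Rightarrow> complex"
  shows "(\<Sum>l\<in>L. c * (\<Sum>n\<in>A. \<Sum>m\<in>B. f n m * g l n m)) = c * (\<Sum>n\<in>A. \<Sum>m\<in>B. f n m * (\<Sum>l\<in>L. g l n m))"
proof -
  have "(\<Sum>l\<in>L. \<Sum>n\<in>A. \<Sum>m\<in>B. f n m * g l n m) = (\<Sum>n\<in>A. \<Sum>m\<in>B. \<Sum>l\<in>L. f n m * g l n m)"
    by (rule trans[OF sum.swap]) (rule sum.cong[OF refl], rule sum.swap)
  then show ?thesis by (simp add: sum_distrib_left[symmetric])
qed

lemma idft_ee: "idft N X k = 1 / of_nat N * (\<Sum>n\<in>{0..<int N}. X n * ee N (k * n))"
  unfolding idft_def omega_powi by simp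

lemma kernel:
  fixes X :: "int \<Rightarrow> complex"
  assumes M: "M > 0" and N: "N = 2*M" and P: "per N X"
  shows "(\<Sum>l\<in>{0..<int M}. idft N X (j - 2*l) * cnj (idft N X (k - 2*l))) =
    of_nat M / (of_nat N)^2 * (\<Sum>n\<in>{0..<int N}. X n * ee N (j*n) *
       (cnj (X n) * ee N (-(k*n)) + cnj (X (n + int M)) * ee N (-(k*(n + int M)))))"
proof -
  have e: "ee N ((j - 2*l)*n) * cnj (ee N ((k - 2*l)*m)) = ee N (j*n) * ee N (-(k*m)) * ee N (2*l*(m-n))" for l n m
  proof -
    have eq: "(j - 2*l)*n + (-((k - 2*l)*m)) = j*n + (-(k*m)) + 2*l*(m-n)" by (simp add: algebra_simps)
    have "ee N ((j - 2*l)*n) * cnj (ee N ((k - 2*l)*m)) = ee N ((j - 2*l)*n + (-((k - 2*l)*m)))"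
      by (simp only: ee_add ee_neg)
    also have "\<dots> = ee N (j*n + (-(k*m)) + 2*l*(m-n))" by (simp only: eq)
    also have "\<dots> = ee N (j*n) * ee N (-(k*m)) * ee N (2*l*(m-n))" by (simp only: ee_add)
    finally show ?thesis .
  qed
  have step1: "idft N X (j - 2*l) * cnj (idft N X (k - 2*l)) = 1/(of_nat N)^2 * (\<Sum>n\<in>{0..<int N}. \<Sum>m\<in>{0..<int N}.
      (X n * ee N (j*n) * (cnj (X m) * ee N (-(k*m)))) * ee N (2*l*(m-n)))" for l
  proof -
    have "idft N X (j - 2*l) * cnj (idft N X (k - 2*l)) = 1/(of_nat N)^2 * ((\<Sum>n\<in>{0..<int N}. X n * ee N ((j - 2*l) * n)) * (\<Sum>m\<in>{0..<int N}. cnj (X m) * cnj (ee N ((k - 2*l) * m))))"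
      unfolding idft_ee by (simp add: power2_eq_square)
    also have "\<dots> = 1/(of_nat N)^2 * (\<Sum>n\<in>{0..<int N}. \<Sum>m\<in>{0..<int N}. (X n * ee N ((j - 2*l) * n)) * (cnj (X m) * cnj (ee N ((k - 2*l) * m))))"
      by (simp only: sum_product)
    also have "\<dots> = 1/(of_nat N)^2 * (\<Sum>n\<in>{0..<int N}. \<Sum>m\<in>{0..<int N}.
      (X n * ee N (j*n) * (cnj (X m) * ee N (-(k*m)))) * ee N (2*l*(m-n)))"
    proof -
      have h: "(X n * ee N ((j - 2*l) * n)) * (cnj (X m) * cnj (ee N ((k - 2*l) * m))) = (X n * ee N (j*n) * (cnj (X m) * ee N (-(k*m)))) * ee N (2*l*(m-n))" for n m
      proof -
        have "(X n * ee N ((j - 2*l) * n)) * (cnj (X m) * cnj (ee N ((k - 2*l) * m))) = (X n * cnj (X m)) * (ee N ((j - 2*l) * n) * cnj (ee N ((k - 2*l) * m)))"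
          by (simp only: ac_simps)
        also have "\<dots> = (X n * cnj (X m)) * (ee N (j*n) * ee N (-(k*m)) * ee N (2*l*(m-n)))" by (simp only: e)
        finally show ?thesis by (simp only: ac_simps)
      qed
      show ?thesis by (simp only: h)
    qed
    finally show ?thesis .
  qed
  have geo: "(\<Sum>l\<in>{0..<int M}. ee N (2*l*(m-n))) = (if int M dvd (m - n) then of_nat M else 0)" for m n
  proof -
    have "ee N (2*l*(m-n)) = cis (2 * pi * of_int (l * (m-n)) / real M)" for l
    proof -
      have "2 * pi * of_int (2*l*(m-n)) / real N = 2 * pi * of_int (l * (m-n)) / real M"
        using M unfolding N by (simp add: field_simps)
      thus ?thesis unfolding ee_def by simp
    qed
    then show ?thesis using geom[OF M, of "m - n"] by simp
  qed
  define F where "F m = cnj (X m) * ee N (-(k*m))" for m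
  have PF: "per N F" unfolding per_def F_def
  proof
    fix x
    have "ee N (-(k*(x + int N))) = ee N (-(k*x))"
      using ee_per[of N "-(k*x)" "-k"] M N by (simp add: algebra_simps)
    then show "cnj (X (x + int N)) * ee N (-(k*(x + int N))) = cnj (X x) * ee N (-(k*x))"
      using P unfolding per_def by simp
  qed
  have "(\<Sum>l\<in>{0..<int M}. idft N X (j - 2*l) * cnj (idft N X (k - 2*l))) =
      1/(of_nat N)^2 * (\<Sum>n\<in>{0..<int N}. \<Sum>m\<in>{0..<int N}. (X n * ee N (j*n) * F m) * (\<Sum>l\<in>{0..<int M}. ee N (2*l*(m-n))))"
    unfolding step1 swap3 F_def ..
  also have "\<dots> = 1/(of_nat N)^2 * (\<Sum>n\<in>{0..<int N}. X n * ee N (j*n) * (\<Sum>m\<in>{0..<int N}. F m * (if int M dvd (m - n) then of_nat M else 0)))"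
    unfolding geo by (simp add: sum_distrib_left mult.assoc)
  also have "\<dots> = 1/(of_nat N)^2 * (\<Sum>n\<in>{0..<int N}. X n * ee N (j*n) * (of_nat M * (F n + F (n + int M))))"
    using alias_sum[OF M N PF] by simp
  also have "\<dots> = of_nat M / (of_nat N)^2 * (\<Sum>n\<in>{0..<int N}. X n * ee N (j*n) * (F n + F (n + int M)))"
    by (simp add: sum_distrib_left algebra_simps)
  finally show ?thesis unfolding F_def .
qed


lemma sum2: "(\<Sum>\<mu>\<in>{0..<2::nat}. f \<mu>) = f 0 + f 1"
  by (simp add: numeral_2_eq_2 atLeast0LessThan)

lemma sum_neg:
  assumes "per N G" "N > 0"
  shows "(\<Sum>n\<in>{0..<int N}. G (- n)) = (\<Sum>n\<in>{0..<int N}. G n)"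
proof (rule sum.reindex_bij_witness[where j="\<lambda>n. (- n) mod int N" and i="\<lambda>n. (- n) mod int N"])
  fix a assume "a \<in> {0..<int N}"
  then show "(- ((- a) mod int N)) mod int N = a" by (simp add: mod_minus_eq)
next
  fix a assume "a \<in> {0..<int N}"
  then show "(- a) mod int N \<in> {0..<int N}" using assms by simp
next
  fix a assume "a \<in> {0..<int N}"
  then show "(- ((- a) mod int N)) mod int N = a" by (simp add: mod_minus_eq)
next
  fix a assume "a \<in> {0..<int N}"
  then show "(- a) mod int N \<in> {0..<int N}" using assms by simp
next
  fix a assume "a \<in> {0..<int N}"
  then show "G ((- a) mod int N) = G (- a)" using per_mod[OF assms(1)] by simp
qed

lemma idft_real:
  fixes X :: "int \<Rightarrow> complex"
  assumes P: "per N X" and S: "\<And>n. X (- n) = cnj (X n)" and N: "N > 0"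
  shows "Im (idft N X k) = 0"
proof -
  define G where "G n = X n * ee N (k * n)" for n
  have PG: "per N G" unfolding per_def G_def
  proof
    fix x
    have "ee N (k * (x + int N)) = ee N (k * x)" using ee_per[OF N, of "k*x" k] by (simp add: algebra_simps)
    then show "X (x + int N) * ee N (k * (x + int N)) = X x * ee N (k * x)" using P unfolding per_def by simp
  qed
  have "cnj (idft N X k) = 1 / of_nat N * (\<Sum>n\<in>{0..<int N}. G (- n))"
    unfolding idft_ee G_def by (simp add: S ee_neg)
  also have "\<dots> = 1 / of_nat N * (\<Sum>n\<in>{0..<int N}. G n)" using sum_neg[OF PG N] by simp
  also have "\<dots> = idft N X k" unfolding idft_ee G_def ..
  finally show ?thesis by (metis Reals_cnj_iff complex_is_Real_iff)
qed

definition good :: "nat \<Rightarrow> nat \<Rightarrow> (nat \<Rightarrow> int \<Rightarrow> complex) \<Rightarrow> bool" where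
  "good N M X \<longleftrightarrow> (\<forall>\<mu>. per N (X \<mu>)) \<and> (\<forall>\<mu> n. X \<mu> (- n) = cnj (X \<mu> n))
     \<and> (\<forall>n. X 0 n * cnj (X 0 n) + X 1 n * cnj (X 1 n) = 2)
     \<and> (\<forall>n. X 0 n * cnj (X 0 (n + int M)) + X 1 n * cnj (X 1 (n + int M)) = 0)"

lemma Re_mult_real: "Im a = 0 \<Longrightarrow> Im b = 0 \<Longrightarrow> Re a * Re b = Re (a * cnj b)"
  by simp

lemma kern_good:
  assumes M: "M > 0" and N: "N = 2 * M" and G: "good N M X"
  shows "(\<Sum>\<mu>\<in>{0..<2::nat}. \<Sum>l\<in>{0..<int M}. Re (idft N (X \<mu>) (j - 2*l)) * Re (idft N (X \<mu>) (k - 2*l)))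
         = (if int N dvd (j - k) then 1 else 0)"
proof -
  have N0: "N > 0" using M N by simp
  have re: "Im (idft N (X \<mu>) q) = 0" for \<mu> q
    using idft_real[of N "X \<mu>"] G N0 unfolding good_def by blast
  have P: "per N (X \<mu>)" for \<mu> using G unfolding good_def by blast
  define T where "T \<mu> n = X \<mu> n * ee N (j*n) *
       (cnj (X \<mu> n) * ee N (-(k*n)) + cnj (X \<mu> (n + int M)) * ee N (-(k*(n + int M))))" for \<mu> n
  have "(\<Sum>\<mu>\<in>{0..<2::nat}. \<Sum>l\<in>{0..<int M}. Re (idft N (X \<mu>) (j - 2*l)) * Re (idft N (X \<mu>) (k - 2*l)))
     = Re (\<Sum>\<mu>\<in>{0..<2::nat}. \<Sum>l\<in>{0..<int M}. idft N (X \<mu>) (j - 2*l) * cnj (idft N (X \<mu>) (k - 2*l)))"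
  proof -
    have h: "Re (idft N (X \<mu>) (j - 2*l)) * Re (idft N (X \<mu>) (k - 2*l)) = Re (idft N (X \<mu>) (j - 2*l) * cnj (idft N (X \<mu>) (k - 2*l)))" for \<mu> l
      by (rule Re_mult_real[OF re re])
    show ?thesis by (simp only: Re_sum h)
  qed
  also have "\<dots> = Re (\<Sum>\<mu>\<in>{0..<2::nat}. of_nat M / (of_nat N)^2 * (\<Sum>n\<in>{0..<int N}. T \<mu> n))"
    unfolding kernel[OF M N P] T_def ..
  also have "\<dots> = Re (of_nat M / (of_nat N)^2 * (\<Sum>n\<in>{0..<int N}. T 0 n + T 1 n))"
    by (simp add: sum2 sum.distrib distrib_left)
  also have "(\<Sum>n\<in>{0..<int N}. T 0 n + T 1 n) = (\<Sum>n\<in>{0..<int N}. 2 * cis (2 * pi * of_int (n * (j - k)) / real N))"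
  proof (rule sum.cong[OF refl])
    fix n
    have e1: "ee N (j*n) * ee N (-(k*n)) = cis (2 * pi * of_int (n * (j - k)) / real N)"
    proof -
      have a: "j*n + -(k*n) = n * (j - k)" by (simp add: algebra_simps)
      have "ee N (j*n) * ee N (-(k*n)) = ee N (j*n + -(k*n))" by (simp only: ee_add)
      also have "\<dots> = cis (2 * pi * of_int (n * (j - k)) / real N)" unfolding a ee_def ..
      finally show ?thesis .
    qed
    have c1: "X 0 n * cnj (X 0 n) + X 1 n * cnj (X 1 n) = 2" and
         c2: "X 0 n * cnj (X 0 (n + int M)) + X 1 n * cnj (X 1 (n + int M)) = 0" using G unfolding good_def by blast+
    have "T 0 n + T 1 n = (X 0 n * cnj (X 0 n) + X 1 n * cnj (X 1 n)) * (ee N (j*n) * ee N (-(k*n)))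
        + (X 0 n * cnj (X 0 (n + int M)) + X 1 n * cnj (X 1 (n + int M))) * (ee N (j*n) * ee N (-(k*(n + int M))))"
      unfolding T_def by (simp add: algebra_simps)
    also have "\<dots> = 2 * cis (2 * pi * of_int (n * (j - k)) / real N)" unfolding c1 c2 e1 by simp
    finally show "T 0 n + T 1 n = 2 * cis (2 * pi * of_int (n * (j - k)) / real N)" .
  qed
  also have "\<dots> = 2 * (if int N dvd (j - k) then of_nat N else 0)"
    unfolding sum_distrib_left[symmetric] geom[OF N0] ..
  finally show ?thesis using M N by (simp add: power2_eq_square)
qed


lemma even_pow: "(- a :: real) ^ (2 * m) = a ^ (2 * m)"
  by (simp add: power_mult)

lemma even_pow4: "(- a :: real) ^ (4 * m) = a ^ (4 * m)"
  using even_pow[of a "2*m"] by (simp add: mult.assoc)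

definition tt :: "nat \<Rightarrow> int \<Rightarrow> real" where "tt N n = pi * real_of_int n / real N"

lemma tt_N: "N > 0 \<Longrightarrow> tt N (n + int N) = tt N n + pi"
  unfolding tt_def by (simp add: field_simps)

lemma tt_M: "N = 2 * M \<Longrightarrow> M > 0 \<Longrightarrow> tt N (n + int M) = tt N n + pi / 2"
  unfolding tt_def by (simp add: field_simps)

lemma tt_neg: "tt N (- n) = - tt N n"
  unfolding tt_def by simp

lemma Ufun_tt: "Ufun r N n = (1/2) * (cos (tt N n) ^ (4*r) + sin (tt N n) ^ (4*r))"
  unfolding Ufun_def tt_def ..

definition AA where "AA r N n = cos (tt N n) ^ (2*r) / sqrt (Ufun r N n)"
definition BB where "BB r N n = sin (tt N n) ^ (2*r) / sqrt (Ufun r N n)"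

lemma betaf_AA: "betaf r N n = complex_of_real (AA r N n)"
  unfolding betaf_def AA_def tt_def ..

lemma alphaf_BB: "alphaf r N n = ee N n * complex_of_real (BB r N n)"
  unfolding alphaf_def BB_def tt_def omega_powi ..

lemma U_pos: assumes "r \<ge> 1" shows "Ufun r N n > 0"
proof -
  let ?c = "cos (tt N n)" and ?s = "sin (tt N n)"
  have c: "?c ^ (4*r) = (?c^2)^(2*r)" and s: "?s ^ (4*r) = (?s^2)^(2*r)"
    by (simp_all add: power_mult[symmetric] mult.commute)
  have "?c ^ (4*r) + ?s ^ (4*r) > 0"
  proof (rule ccontr)
    assume "\<not> ?thesis"
    moreover have "?c ^ (4*r) \<ge> 0" "?s ^ (4*r) \<ge> 0" unfolding c s by simp_all
    ultimately have "?c ^ (4*r) = 0" "?s ^ (4*r) = 0" by linarith+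
    hence "?c = 0" "?s = 0" using assms by simp_all
    thus False using sin_cos_squared_add[of "tt N n"] by simp
  qed
  thus ?thesis unfolding Ufun_tt by simp
qed

lemma AB_sq: assumes "r \<ge> 1" shows "(AA r N n)^2 + (BB r N n)^2 = 2"
proof -
  have U: "Ufun r N n > 0" using U_pos[OF assms] .
  have "(AA r N n)^2 + (BB r N n)^2 = (cos (tt N n) ^ (4*r) + sin (tt N n) ^ (4*r)) / Ufun r N n"
    unfolding AA_def BB_def using U
    by (simp add: power_divide power_mult[symmetric] add_divide_distrib mult.commute)
  also have "\<dots> = 2" using U unfolding Ufun_tt by (simp add: field_simps)
  finally show ?thesis .
qed

lemma U_N: "N > 0 \<Longrightarrow> Ufun r N (n + int N) = Ufun r N n"
  unfolding Ufun_tt tt_N by (simp add: even_pow4)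
lemma AA_N: "N > 0 \<Longrightarrow> AA r N (n + int N) = AA r N n"
  unfolding AA_def by (simp add: U_N tt_N even_pow)
lemma BB_N: "N > 0 \<Longrightarrow> BB r N (n + int N) = BB r N n"
  unfolding BB_def by (simp add: U_N tt_N even_pow)

lemma U_neg: "Ufun r N (- n) = Ufun r N n"
  unfolding Ufun_tt tt_neg by (simp add: even_pow4)
lemma AA_neg: "AA r N (- n) = AA r N n"
  unfolding AA_def by (simp add: U_neg tt_neg)
lemma BB_neg: "BB r N (- n) = BB r N n"
  unfolding BB_def by (simp add: U_neg tt_neg even_pow)

lemma cos_pi2: "cos (x + pi/2) = - sin x" by (simp add: cos_add)
lemma sin_pi2: "sin (x + pi/2) = cos x" by (simp add: sin_add)

lemma U_M: "N = 2 * M \<Longrightarrow> M > 0 \<Longrightarrow> Ufun r N (n + int M) = Ufun r N n"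
  unfolding Ufun_tt by (simp add: tt_M cos_pi2 sin_pi2 even_pow4)
lemma AA_M: "N = 2 * M \<Longrightarrow> M > 0 \<Longrightarrow> AA r N (n + int M) = BB r N n"
  unfolding AA_def BB_def by (simp add: U_M tt_M cos_pi2 even_pow)
lemma BB_M: "N = 2 * M \<Longrightarrow> M > 0 \<Longrightarrow> BB r N (n + int M) = AA r N n"
  unfolding AA_def BB_def by (simp add: U_M tt_M sin_pi2)

lemma ee_M: assumes "N = 2 * M" "M > 0" shows "ee N (int M) = -1"
proof -
  have "2 * pi * of_int (int M) / real N = pi" using assms by simp
  thus ?thesis unfolding ee_def by simp
qed

lemma good_psi:
  assumes r: "r \<ge> 1" and N: "N = 2 * M" and M: "M > 0"
  shows "good N M (psi_hat r N)"
  unfolding good_def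
proof (intro conjI allI)
  have N0: "N > 0" using N M by simp
  have eN: "ee N (n + int N) = ee N n" for n using ee_per[OF N0, of n 1] by simp
  fix \<mu>
  show "per N (psi_hat r N \<mu>)" unfolding per_def psi_hat_def
    by (simp add: betaf_AA alphaf_BB AA_N BB_N N0 eN)
next
  fix \<mu> n
  show "psi_hat r N \<mu> (- n) = cnj (psi_hat r N \<mu> n)" unfolding psi_hat_def
    by (simp add: betaf_AA alphaf_BB AA_neg BB_neg ee_neg)
next
  fix n
  have "ee N n * cnj (ee N n) = 1" using ee_norm[of N n] by (simp add: mult.commute)
  then have "psi_hat r N 0 n * cnj (psi_hat r N 0 n) + psi_hat r N 1 n * cnj (psi_hat r N 1 n)
     = complex_of_real ((AA r N n)^2 + (BB r N n)^2)"
    unfolding psi_hat_def betaf_AA alphaf_BB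
    by (simp add: power2_eq_square algebra_simps)
  then show "psi_hat r N 0 n * cnj (psi_hat r N 0 n) + psi_hat r N 1 n * cnj (psi_hat r N 1 n) = 2"
    using AB_sq[OF r] by simp
next
  fix n
  have e: "ee N (n + int M) = - ee N n" using ee_add[of N n "int M"] ee_M[OF N M] by simp
  have "ee N n * cnj (ee N n) = 1" using ee_norm[of N n] by (simp add: mult.commute)
  then show "psi_hat r N 0 n * cnj (psi_hat r N 0 (n + int M)) + psi_hat r N 1 n * cnj (psi_hat r N 1 (n + int M)) = 0"
    unfolding psi_hat_def betaf_AA alphaf_BB using AA_M[OF N M] BB_M[OF N M] e
    by (simp add: algebra_simps)
qed

definition hh :: "nat \<Rightarrow> int \<Rightarrow> complex" where
  "hh N n = (let m = n mod int N in
      if 0 < m \<and> 2 * m < int N then - \<i> else if int N < 2 * m then \<i> else 1)"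

lemma phi_hh: "phi_hat r N \<mu> = (\<lambda>n. hh N n * psi_hat r N \<mu> n)"
  unfolding phi_hat_def hh_def by (auto simp: Let_def)

lemma hh_per: "per N (hh N)"
  unfolding per_def hh_def by simp

lemma hh_norm: "hh N n * cnj (hh N n) = 1"
  unfolding hh_def by (auto simp: Let_def)

lemma hh_neg: assumes "N > 0" shows "hh N (- n) = cnj (hh N n)"
proof -
  define m where "m = n mod int N"
  have m: "0 \<le> m" "m < int N" using assms unfolding m_def by simp_all
  have nm: "(- n) mod int N = (if m = 0 then 0 else int N - m)"
    unfolding m_def by (rule zmod_zminus1_eq_if)
  show ?thesis unfolding hh_def Let_def nm m_def[symmetric] using m by auto
qed

lemma good_mult:
  assumes G: "good N M X" and P: "per N h" and H: "\<And>n. h n * cnj (h n) = 1"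
    and S: "\<And>n. h (- n) = cnj (h n)"
  shows "good N M (\<lambda>\<mu> n. h n * X \<mu> n)"
  unfolding good_def
proof (intro conjI allI)
  fix \<mu>
  show "per N (\<lambda>n. h n * X \<mu> n)" using G P unfolding good_def per_def by simp
next
  fix \<mu> n
  show "h (- n) * X \<mu> (- n) = cnj (h n * X \<mu> n)" using G S unfolding good_def by simp
next
  fix n
  have "h n * X 0 n * cnj (h n * X 0 n) + h n * X 1 n * cnj (h n * X 1 n)
     = (h n * cnj (h n)) * (X 0 n * cnj (X 0 n) + X 1 n * cnj (X 1 n))" by (simp add: algebra_simps)
  then show "h n * X 0 n * cnj (h n * X 0 n) + h n * X 1 n * cnj (h n * X 1 n) = 2"
    using G H unfolding good_def by simp
next
  fix n
  have "h n * X 0 n * cnj (h (n + int M) * X 0 (n + int M)) + h n * X 1 n * cnj (h (n + int M) * X 1 (n + int M))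
     = (h n * cnj (h (n + int M))) * (X 0 n * cnj (X 0 (n + int M)) + X 1 n * cnj (X 1 (n + int M)))" by (simp add: algebra_simps)
  then show "h n * X 0 n * cnj (h (n + int M) * X 0 (n + int M)) + h n * X 1 n * cnj (h (n + int M) * X 1 (n + int M)) = 0"
    using G unfolding good_def by simp
qed

lemma good_phi:
  assumes r: "r \<ge> 1" and N: "N = 2 * M" and M: "M > 0"
  shows "good N M (phi_hat r N)"
proof -
  have "(phi_hat r N) = (\<lambda>\<mu> n. hh N n * psi_hat r N \<mu> n)" using phi_hh by auto
  moreover have "good N M (\<lambda>\<mu> n. hh N n * psi_hat r N \<mu> n)"
    by (rule good_mult[OF good_psi[OF r N M] hh_per hh_norm hh_neg]) (use N M in simp)
  ultimately show ?thesis by simp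
qed

lemma recon:
  fixes g :: "nat \<Rightarrow> int \<Rightarrow> real"
  assumes K: "\<And>j k. (\<Sum>\<mu>\<in>{0..<2::nat}. \<Sum>l\<in>{0..<int M}. g \<mu> (j - 2*l) * g \<mu> (k - 2*l)) = (if int N dvd (j - k) then 1 else 0)"
    and P: "per N x" and N0: "N > 0"
  shows "(\<Sum>\<mu>\<in>{0..<2::nat}. \<Sum>l\<in>{0..<int M}. ip N x (shift2 (g \<mu>) l) * g \<mu> (k - 2*l)) = x k"
proof -
  have "(\<Sum>\<mu>\<in>{0..<2::nat}. \<Sum>l\<in>{0..<int M}. ip N x (shift2 (g \<mu>) l) * g \<mu> (k - 2*l))
      = (\<Sum>\<mu>\<in>{0..<2::nat}. \<Sum>l\<in>{0..<int M}. \<Sum>j\<in>{0..<int N}. x j * (g \<mu> (j - 2*l) * g \<mu> (k - 2*l)))"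
    unfolding ip_def shift2_def by (simp add: sum_distrib_right mult.assoc)
  also have "\<dots> = (\<Sum>\<mu>\<in>{0..<2::nat}. \<Sum>j\<in>{0..<int N}. \<Sum>l\<in>{0..<int M}. x j * (g \<mu> (j - 2*l) * g \<mu> (k - 2*l)))"
    by (rule sum.cong[OF refl], rule sum.swap)
  also have "\<dots> = (\<Sum>j\<in>{0..<int N}. \<Sum>\<mu>\<in>{0..<2::nat}. \<Sum>l\<in>{0..<int M}. x j * (g \<mu> (j - 2*l) * g \<mu> (k - 2*l)))"
    by (rule sum.swap)
  also have "\<dots> = (\<Sum>j\<in>{0..<int N}. x j * (if int N dvd (j - k) then 1 else 0))"
    by (simp add: sum_distrib_left[symmetric] K)
  also have "\<dots> = (\<Sum>j\<in>{0..<int N}. if j = k mod int N then x j else 0)"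
  proof (rule sum.cong[OF refl])
    fix j assume j: "j \<in> {0..<int N}"
    have "int N dvd (j - k) \<longleftrightarrow> j mod int N = k mod int N" by (simp add: mod_eq_dvd_iff)
    also have "j mod int N = j" using j by simp
    finally show "x j * (if int N dvd (j - k) then 1 else 0) = (if j = k mod int N then x j else 0)" by simp
  qed
  also have "\<dots> = x (k mod int N)" using N0 by (simp add: sum.delta')
  also have "\<dots> = x k" by (rule per_mod[OF P])
  finally show ?thesis .
qed

lemma frame1:
  fixes g :: "nat \<Rightarrow> int \<Rightarrow> real"
  assumes R: "\<And>k. (\<Sum>\<mu>\<in>{0..<2::nat}. \<Sum>l\<in>{0..<int M}. ip N x (shift2 (g \<mu>) l) * g \<mu> (k - 2*l)) = x k"
  shows "(\<Sum>\<mu>\<in>{0..<2::nat}. \<Sum>l\<in>{0..<int M}. (ip N x (shift2 (g \<mu>) l))\<^sup>2) = ip N x x"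
proof -
  have "(\<Sum>\<mu>\<in>{0..<2::nat}. \<Sum>l\<in>{0..<int M}. (ip N x (shift2 (g \<mu>) l))\<^sup>2)
     = (\<Sum>\<mu>\<in>{0..<2::nat}. \<Sum>l\<in>{0..<int M}. \<Sum>k\<in>{0..<int N}. x k * (ip N x (shift2 (g \<mu>) l) * g \<mu> (k - 2*l)))"
  proof (intro sum.cong refl)
    fix \<mu> l
    show "(ip N x (shift2 (g \<mu>) l))\<^sup>2 = (\<Sum>k\<in>{0..<int N}. x k * (ip N x (shift2 (g \<mu>) l) * g \<mu> (k - 2*l)))"
      unfolding power2_eq_square
      by (subst (2) ip_def) (simp add: shift2_def sum_distrib_left algebra_simps)
  qed
  also have "\<dots> = (\<Sum>\<mu>\<in>{0..<2::nat}. \<Sum>k\<in>{0..<int N}. \<Sum>l\<in>{0..<int M}. x k * (ip N x (shift2 (g \<mu>) l) * g \<mu> (k - 2*l)))"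
    by (rule sum.cong[OF refl], rule sum.swap)
  also have "\<dots> = (\<Sum>k\<in>{0..<int N}. \<Sum>\<mu>\<in>{0..<2::nat}. \<Sum>l\<in>{0..<int M}. x k * (ip N x (shift2 (g \<mu>) l) * g \<mu> (k - 2*l)))"
    by (rule sum.swap)
  also have "\<dots> = (\<Sum>k\<in>{0..<int N}. x k * x k)"
    by (simp add: sum_distrib_left[symmetric] R)
  also have "\<dots> = ip N x x" unfolding ip_def ..
  finally show ?thesis .
qed


theorem corollary4p4:
  fixes J r :: nat and N :: nat
  assumes "J \<ge> 1" and "r \<ge> 1" and "N = 2 ^ J"
  shows "(\<forall>x \<in> PiN N. \<forall>k :: int.
            x k = (1/2) * (\<Sum>\<mu>\<in>{0..<2::nat}. \<Sum>l\<in>{0..<int N div 2}.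
                    ip N x (shift2 (psi1 r N \<mu>) l) * psi1 r N \<mu> (k - 2 * l)
                  + ip N x (shift2 (phi1 r N \<mu>) l) * phi1 r N \<mu> (k - 2 * l)))
       \<and> (\<forall>x \<in> PiN N.
            (\<Sum>\<mu>\<in>{0..<2::nat}. \<Sum>l\<in>{0..<int N div 2}.
                 (ip N x (shift2 (psi1 r N \<mu>) l))\<^sup>2 + (ip N x (shift2 (phi1 r N \<mu>) l))\<^sup>2)
            = 2 * ip N x x)"
proof -
  define M where "M = (2::nat) ^ (J - 1)"
  have NM: "N = 2 * M" unfolding M_def assms(3) using assms(1)
    by (metis Suc_diff_1 less_le_trans less_numeral_extra(1) power_Suc)
  have M0: "M > 0" unfolding M_def by simp
  have N0: "N > 0" using NM M0 by simp
  have div: "int N div 2 = int M" using NM by simp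
  have Kpsi: "\<And>j k. (\<Sum>\<mu>\<in>{0..<2::nat}. \<Sum>l\<in>{0..<int M}. psi1 r N \<mu> (j - 2*l) * psi1 r N \<mu> (k - 2*l)) = (if int N dvd (j - k) then 1 else 0)"
    unfolding psi1_def by (rule kern_good[OF M0 NM good_psi[OF assms(2) NM M0]])
  have Kphi: "\<And>j k. (\<Sum>\<mu>\<in>{0..<2::nat}. \<Sum>l\<in>{0..<int M}. phi1 r N \<mu> (j - 2*l) * phi1 r N \<mu> (k - 2*l)) = (if int N dvd (j - k) then 1 else 0)"
    unfolding phi1_def by (rule kern_good[OF M0 NM good_phi[OF assms(2) NM M0]])
  have R: "(\<Sum>\<mu>\<in>{0..<2::nat}. \<Sum>l\<in>{0..<int M}. ip N x (shift2 (psi1 r N \<mu>) l) * psi1 r N \<mu> (k - 2*l)) = x k"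
          "(\<Sum>\<mu>\<in>{0..<2::nat}. \<Sum>l\<in>{0..<int M}. ip N x (shift2 (phi1 r N \<mu>) l) * phi1 r N \<mu> (k - 2*l)) = x k"
    if "x \<in> PiN N" for x k
  proof -
    have P: "per N x" using that unfolding PiN_def per_def by simp
    show "(\<Sum>\<mu>\<in>{0..<2::nat}. \<Sum>l\<in>{0..<int M}. ip N x (shift2 (psi1 r N \<mu>) l) * psi1 r N \<mu> (k - 2*l)) = x k"
      by (rule recon[OF Kpsi P N0])
    show "(\<Sum>\<mu>\<in>{0..<2::nat}. \<Sum>l\<in>{0..<int M}. ip N x (shift2 (phi1 r N \<mu>) l) * phi1 r N \<mu> (k - 2*l)) = x k"
      by (rule recon[OF Kphi P N0])
  qed
  show ?thesis
  proof (intro conjI ballI allI)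
    fix x k assume x: "x \<in> PiN N"
    show "x k = (1/2) * (\<Sum>\<mu>\<in>{0..<2::nat}. \<Sum>l\<in>{0..<int N div 2}.
                    ip N x (shift2 (psi1 r N \<mu>) l) * psi1 r N \<mu> (k - 2 * l)
                  + ip N x (shift2 (phi1 r N \<mu>) l) * phi1 r N \<mu> (k - 2 * l))"
      unfolding div sum.distrib R[OF x] by simp
  next
    fix x assume x: "x \<in> PiN N"
    show "(\<Sum>\<mu>\<in>{0..<2::nat}. \<Sum>l\<in>{0..<int N div 2}.
                 (ip N x (shift2 (psi1 r N \<mu>) l))\<^sup>2 + (ip N x (shift2 (phi1 r N \<mu>) l))\<^sup>2)
            = 2 * ip N x x"
      unfolding div sum.distrib frame1[OF R(1)[OF x]] frame1[OF R(2)[OF x]] by simp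
  qed
qed

end
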